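(* Let $I$ be a finite set, $T$ a tree on $I$ with $n$ inner vertices, fix a nice total order on $\mathcal{V}(T)$ with associated edge-labeling $\lambda$, and let $\hat{0}=x_0\lhd x_1\lhd\dots\lhd x_n=T$ be the unique maximal chain of $[\hat{0},T]$ with increasing labels. For $j\in[n]$ let $\mathsf{B}_j$ be the set of atoms $a$ of $[\hat{0},T]$ with $\lambda(\hat{0},a)=j$. Let $i\in[n]$ and, for each $j\in[i]$, let $a_j\in\mathsf{B}_j$. Then $x_i=a_1\vee a_2\vee\dots\vee a_i$.
   Context: A tree on a finite set $I$ is a (non-planar) rooted binary tree whose leaves are bijectively labeled by $I$: vertices are inner vertices (valence $3$) and leaves and the root (valence $1$), edges oriented towards the root; one-leaf trees are allowed. A forest on $I$ is a set of trees whose leaf sets partition $I$; $\mathcal{V}(F)$ is its set of inner vertices. For forests $F,G$ on $I$, $F \leq G$ if there is a continuous map $F\to G$ which (D1) is increasing with respect to orientation towards the root, (D2) maps inner vertices to inner vertices injectively, (D3) is the identity of $I$ on leaves, (D4) is injective on each tree of $F$. This gives the poset $\operatorname{For}(I)$, graded by number of inner vertices, with minimum $\hat{0}$ (no inner vertices); $[\hat{0},T]$ is a lattice with join $\vee$. For $F \leq G \leq T$ inner vertices are regarded as subsets $\mathcal{V}(F)\subseteq\mathcal{V}(G)\subseteq\mathcal{V}(T)$; if $F\lhd G$ there is a unique $v$ with $\mathcal{V}(G)=\mathcal{V}(F)\cup\{v\}$. Partial order on $\mathcal{V}(T)$: $v\preceq v'$ if $v'$ lies on the path between the root and $v$. A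 nice total order is any total order on $\mathcal{V}(T)$ extending $\preceq$; using it the inner vertices are labeled $1,\dots,n$ increasingly and identified with their labels. The edge-labeling is $\lambda(F,G)$ := the unique element of $\mathcal{V}(G)\setminus\mathcal{V}(F)$ for $F\lhd G$ in $[\hat{0},T]$. Atoms are the elements covering $\hat{0}$; a chain is increasing if its sequence of labels is increasing. *)

theory Defs
  imports Main
begin

text \<open>
A forest on a finite set I is encoded by its set of clusters
(leaf sets below each vertex): singletons {x} are the leaves, clusters of
cardinality at least 2 are the inner vertices, the maximal clusters are the
(leaf sets of the) trees; the root of each tree sits above its maximal cluster.
Every edge is identified with its lower endpoint (a cluster).
\<close>

definition forest :: "'a set \<Rightarrow> 'a set set \<Rightarrow> bool" where
  "forest I F \<longleftrightarrow> finite I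
     \<and> (\<forall>C\<in>F. C \<subseteq> I \<and> C \<noteq> {})
     \<and> (\<forall>x\<in>I. {x} \<in> F)
     \<and> (\<forall>C\<in>F. \<forall>D\<in>F. C \<subseteq> D \<or> D \<subseteq> C \<or> C \<inter> D = {})
     \<and> (\<forall>C\<in>F. 2 \<le> card C \<longrightarrow>
           (\<exists>A\<in>F. \<exists>B\<in>F. A \<inter> B = {} \<and> A \<union> B = C \<and> A \<noteq> C \<and> B \<noteq> C))"

definition tree :: "'a set \<Rightarrow> 'a set set \<Rightarrow> bool" where
  "tree I T \<longleftrightarrow> forest I T \<and> I \<in> T"

definition inner_vs :: "'a set set \<Rightarrow> 'a set set" where
  "inner_vs F = {C\<in>F. 2 \<le> card C}"

definition is_parent :: "'a set set \<Rightarrow> 'a set \<Rightarrow> 'a set \<Rightarrow> bool" where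
  "is_parent F C P \<longleftrightarrow> C \<in> F \<and> P \<in> F \<and> C \<subset> P \<and> (\<forall>D\<in>F. C \<subset> D \<longrightarrow> P \<subseteq> D)"

definition same_tree :: "'a set set \<Rightarrow> 'a set \<Rightarrow> 'a set \<Rightarrow> bool" where
  "same_tree F C C' \<longleftrightarrow> (\<exists>D\<in>F. C \<subseteq> D \<and> C' \<subseteq> D)"

text \<open>Image (set of edges of G, each identified by its lower endpoint) of the
  edge of F above C: the path in G from phi C up to phi (parent C), or up to
  the root of G if C is the top vertex of its tree (roots are mapped to roots).\<close>
definition edge_image ::
  "'a set set \<Rightarrow> 'a set set \<Rightarrow> ('a set \<Rightarrow> 'a set) \<Rightarrow> 'a set \<Rightarrow> 'a set set" where
  "edge_image F G \<phi> C = {D\<in>G. \<phi> C \<subseteq> D \<and> (\<forall>P. is_parent F C P \<longrightarrow> D \<subset> \<phi> P)}"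

text \<open>Combinatorial form of a map F \<rightarrow> G satisfying (D1)-(D4).\<close>
definition forest_map ::
  "'a set \<Rightarrow> 'a set set \<Rightarrow> 'a set set \<Rightarrow> ('a set \<Rightarrow> 'a set) \<Rightarrow> bool" where
  "forest_map I F G \<phi> \<longleftrightarrow>
     (\<forall>C\<in>F. \<phi> C \<in> G)
   \<and> (\<forall>x\<in>I. \<phi> {x} = {x})
   \<and> (\<forall>C\<in>inner_vs F. \<phi> C \<in> inner_vs G)
   \<and> inj_on \<phi> (inner_vs F)
   \<and> (\<forall>C P. is_parent F C P \<longrightarrow> \<phi> C \<subset> \<phi> P)
   \<and> (\<forall>C\<in>F. \<forall>C'\<in>F. C \<noteq> C' \<and> same_tree F C C' \<longrightarrow>
         edge_image F G \<phi> C \<inter> edge_image F G \<phi> C' = {})"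

definition forest_le :: "'a set \<Rightarrow> 'a set set \<Rightarrow> 'a set set \<Rightarrow> bool" where
  "forest_le I F G \<longleftrightarrow> forest I F \<and> forest I G \<and> (\<exists>\<phi>. forest_map I F G \<phi>)"

definition bot_forest :: "'a set \<Rightarrow> 'a set set" where
  "bot_forest I = (\<lambda>x. {x}) ` I"

definition interval :: "'a set \<Rightarrow> 'a set set \<Rightarrow> 'a set set set" where
  "interval I T = {F. forest_le I (bot_forest I) F \<and> forest_le I F T}"

definition covers_in :: "'a set \<Rightarrow> 'a set set \<Rightarrow> 'a set set \<Rightarrow> 'a set set \<Rightarrow> bool" where
  "covers_in I T F G \<longleftrightarrow> F \<in> interval I T \<and> G \<in> interval I T \<and> forest_le I F G \<and> F \<noteq> G
     \<and> (\<forall>H\<in>interval I T. forest_le I F H \<and> forest_le I H G \<longrightarrow> H = F \<or> H = G)"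

definition atom_in :: "'a set \<Rightarrow> 'a set set \<Rightarrow> 'a set set \<Rightarrow> bool" where
  "atom_in I T a \<longleftrightarrow> covers_in I T (bot_forest I) a"

text \<open>Inner vertices of F regarded as a subset of V(T) (via the map F \<rightarrow> T).\<close>
definition vT :: "'a set \<Rightarrow> 'a set set \<Rightarrow> 'a set set \<Rightarrow> 'a set set" where
  "vT I T F = (THE S. \<exists>\<phi>. forest_map I F T \<phi> \<and> S = \<phi> ` inner_vs F)"

text \<open>The edge label: the unique element of V(G) - V(F), as a vertex of T.\<close>
definition elabel :: "'a set \<Rightarrow> 'a set set \<Rightarrow> 'a set set \<Rightarrow> 'a set set \<Rightarrow> 'a set" where
  "elabel I T F G = the_elem (vT I T G - vT I T F)"

text \<open>A nice total order on V(T), given by the increasing labelling 1..n: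
  it extends v \<preceq> v' (v' on the path from v to the root, i.e. v \<subseteq> v').\<close>
definition nice_order :: "'a set set \<Rightarrow> ('a set \<Rightarrow> nat) \<Rightarrow> nat \<Rightarrow> bool" where
  "nice_order T lab n \<longleftrightarrow> bij_betw lab (inner_vs T) {1..n}
     \<and> (\<forall>v\<in>inner_vs T. \<forall>v'\<in>inner_vs T. v \<subseteq> v' \<longrightarrow> lab v \<le> lab v')"

definition Bset :: "'a set \<Rightarrow> 'a set set \<Rightarrow> ('a set \<Rightarrow> nat) \<Rightarrow> nat \<Rightarrow> 'a set set set" where
  "Bset I T lab j = {a. atom_in I T a \<and> lab (elabel I T (bot_forest I) a) = j}"

definition join_in :: "'a set \<Rightarrow> 'a set set \<Rightarrow> 'a set set set \<Rightarrow> 'a set set" where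
  "join_in I T S = (THE z. z \<in> interval I T \<and> (\<forall>s\<in>S. forest_le I s z)
      \<and> (\<forall>w\<in>interval I T. (\<forall>s\<in>S. forest_le I s w) \<longrightarrow> forest_le I z w))"

end

theory Submission
  imports Defs
begin

definition splits :: "'a set set \<Rightarrow> 'a set \<Rightarrow> 'a set \<Rightarrow> 'a set \<Rightarrow> bool" where
  "splits F C A B \<longleftrightarrow> A \<in> F \<and> B \<in> F \<and> A \<inter> B = {} \<and> A \<union> B = C \<and> A \<noteq> C \<and> B \<noteq> C"

lemma forest_fin: "forest I F \<Longrightarrow> finite I"
  by (simp add: forest_def)
lemma forest_sub: "forest I F \<Longrightarrow> C \<in> F \<Longrightarrow> C \<subseteq> I"
  by (simp add: forest_def)
lemma forest_ne: "forest I F \<Longrightarrow> C \<in> F \<Longrightarrow> C \<noteq> {}"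
  by (simp add: forest_def)
lemma forest_single: "forest I F \<Longrightarrow> x \<in> I \<Longrightarrow> {x} \<in> F"
  by (simp add: forest_def)
lemma forest_lam: "forest I F \<Longrightarrow> C \<in> F \<Longrightarrow> D \<in> F \<Longrightarrow> C \<subseteq> D \<or> D \<subseteq> C \<or> C \<inter> D = {}"
  by (simp add: forest_def)
lemma forest_split: "forest I F \<Longrightarrow> C \<in> F \<Longrightarrow> 2 \<le> card C \<Longrightarrow> \<exists>A B. splits F C A B"
proof -
  assume f: "forest I F" and c: "C \<in> F" and "2 \<le> card C"
  have "\<forall>C\<in>F. 2 \<le> card C \<longrightarrow>
           (\<exists>A\<in>F. \<exists>B\<in>F. A \<inter> B = {} \<and> A \<union> B = C \<and> A \<noteq> C \<and> B \<noteq> C)"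
    using f by (simp add: forest_def)
  then have "\<exists>A\<in>F. \<exists>B\<in>F. A \<inter> B = {} \<and> A \<union> B = C \<and> A \<noteq> C \<and> B \<noteq> C"
    using c \<open>2 \<le> card C\<close> by meson
  then show ?thesis unfolding splits_def by meson
qed
lemma forest_finC: "forest I F \<Longrightarrow> C \<in> F \<Longrightarrow> finite C"
  using forest_fin forest_sub finite_subset by metis
lemma forest_finF: "forest I F \<Longrightarrow> finite F"
proof -
  assume f: "forest I F"
  have "F \<subseteq> Pow I" using forest_sub[OF f] by blast
  thus ?thesis using forest_fin[OF f] finite_subset by blast
qed
lemma forest_small: "forest I F \<Longrightarrow> C \<in> F \<Longrightarrow> \<not> 2 \<le> card C \<Longrightarrow> \<exists>x\<in>I. C = {x}"
proof -
  assume f: "forest I F" and c: "C \<in> F" and n: "\<not> 2 \<le> card C"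
  have "finite C" "C \<noteq> {}" using forest_finC[OF f c] forest_ne[OF f c] by auto
  then have "card C \<noteq> 0" by simp
  then have "card C = 1" using n by linarith
  then obtain x where "C = {x}" using card_1_singletonE by blast
  thus ?thesis using forest_sub[OF f c] by blast
qed

lemma splits_sym: "splits F C A B \<Longrightarrow> splits F C B A"
  unfolding splits_def by blast

lemma splits_card: "forest I F \<Longrightarrow> C \<in> F \<Longrightarrow> splits F C A B \<Longrightarrow> card A < card C \<and> card B < card C"
proof -
  assume f: "forest I F" and c: "C \<in> F" and s: "splits F C A B"
  have "A \<subset> C" "B \<subset> C" using s unfolding splits_def by auto
  thus ?thesis using forest_finC[OF f c] psubset_card_mono by blast
qed

lemma sub_split:
  assumes f: "forest I F" and s: "splits F C A B" and d: "D \<in> F" and dc: "D \<subset> C"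
  shows "D \<subseteq> A \<or> D \<subseteq> B"
proof -
  have a: "A \<in> F" and b: "B \<in> F" and ab: "A \<inter> B = {}" and u: "A \<union> B = C"
    using s unfolding splits_def by auto
  have an: "A \<noteq> {}" and bn: "B \<noteq> {}" using forest_ne[OF f a] forest_ne[OF f b] .
  have dn: "D \<noteq> {}" using forest_ne[OF f d] .
  show ?thesis
    using forest_lam[OF f d a] forest_lam[OF f d b] ab u dc an bn dn by blast
qed

lemma splits_parent:
  assumes f: "forest I F" and c: "C \<in> F" and s: "splits F C A B"
  shows "is_parent F A C"
proof -
  have a: "A \<in> F" and b: "B \<in> F" and ab: "A \<inter> B = {}" and u: "A \<union> B = C" and ac: "A \<noteq> C"
    using s unfolding splits_def by auto
  have an: "A \<noteq> {}" and bn: "B \<noteq> {}" using forest_ne[OF f a] forest_ne[OF f b] .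
  have "C \<subseteq> D" if d: "D \<in> F" and ad: "A \<subset> D" for D
  proof -
    have "D \<subseteq> C \<or> C \<subseteq> D \<or> D \<inter> C = {}" using forest_lam[OF f d c] .
    moreover have "\<not> D \<subset> C"
    proof
      assume "D \<subset> C"
      then have "D \<subseteq> A \<or> D \<subseteq> B" using sub_split[OF f s d] by blast
      thus False using ad ab an by blast
    qed
    ultimately show ?thesis using ad an u by blast
  qed
  thus ?thesis unfolding is_parent_def using a c ac u by blast
qed

lemma parent_unique: "is_parent F C P \<Longrightarrow> is_parent F C P' \<Longrightarrow> P = P'"
  unfolding is_parent_def by blast

lemma parent_exists:
  assumes f: "forest I F" and c: "C \<in> F" and e: "E \<in> F" and ce: "C \<subset> E"
  shows "\<exists>P. is_parent F C P \<and> P \<subseteq> E"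
proof -
  let ?S = "{D\<in>F. C \<subset> D}"
  have fin: "finite ?S" using forest_finF[OF f] by simp
  have ne: "?S \<noteq> {}" using e ce by blast
  obtain P where p: "P \<in> ?S" and pm: "\<forall>b\<in>?S. b \<le> P \<longrightarrow> P = b"
    using finite_has_minimal[OF fin ne] by blast
  have cn: "C \<noteq> {}" using forest_ne[OF f c] .
  have min: "P \<subseteq> D" if "D \<in> F" "C \<subset> D" for D
  proof -
    have "P \<subseteq> D \<or> D \<subseteq> P \<or> P \<inter> D = {}" using forest_lam[OF f _ that(1)] p by blast
    thus ?thesis using pm that cn p by blast
  qed
  have "is_parent F C P" unfolding is_parent_def using p c min by blast
  moreover have "P \<subseteq> E" using min e ce by blast
  ultimately show ?thesis by blast
qed

lemma parent_split:
  assumes f: "forest I F" and p: "is_parent F C P" and s: "splits F P A B"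
  shows "C = A \<or> C = B"
proof -
  have c: "C \<in> F" and cp: "C \<subset> P" and m: "\<forall>D\<in>F. C \<subset> D \<longrightarrow> P \<subseteq> D" using p unfolding is_parent_def by auto
  have a: "A \<in> F" and b: "B \<in> F" and "A \<noteq> P" "B \<noteq> P" "A \<union> B = P" using s unfolding splits_def by auto
  have "C \<subseteq> A \<or> C \<subseteq> B" using sub_split[OF f s c cp] .
  thus ?thesis using m a b \<open>A \<noteq> P\<close> \<open>B \<noteq> P\<close> \<open>A \<union> B = P\<close> by blast
qed

definition lca :: "'a set set \<Rightarrow> 'a set \<Rightarrow> 'a set" where
  "lca G C = \<Inter>{D\<in>G. C \<subseteq> D}"

lemma lca_props:
  assumes f: "forest I G" and cn: "C \<noteq> {}" and d0: "D0 \<in> G" and cd: "C \<subseteq> D0"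
  shows "lca G C \<in> G" "C \<subseteq> lca G C" "\<And>D. D \<in> G \<Longrightarrow> C \<subseteq> D \<Longrightarrow> lca G C \<subseteq> D"
proof -
  let ?S = "{D\<in>G. C \<subseteq> D}"
  have fin: "finite ?S" using forest_finF[OF f] by simp
  have ne: "?S \<noteq> {}" using d0 cd by blast
  obtain m where m: "m \<in> ?S" and mm: "\<forall>b\<in>?S. b \<le> m \<longrightarrow> m = b"
    using finite_has_minimal[OF fin ne] by blast
  have le: "m \<subseteq> D" if "D \<in> ?S" for D
  proof -
    have "m \<subseteq> D \<or> D \<subseteq> m \<or> m \<inter> D = {}" using forest_lam[OF f] m that by blast
    thus ?thesis using mm that m cn by blast
  qed
  have eq: "lca G C = m" unfolding lca_def using le m by blast
  show "lca G C \<in> G" "C \<subseteq> lca G C" using eq m by auto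
  show "\<And>D. D \<in> G \<Longrightarrow> C \<subseteq> D \<Longrightarrow> lca G C \<subseteq> D" using eq le by auto
qed

lemma fm_in: "forest_map I F G \<phi> \<Longrightarrow> C \<in> F \<Longrightarrow> \<phi> C \<in> G"
  by (simp add: forest_map_def)
lemma fm_leaf: "forest_map I F G \<phi> \<Longrightarrow> x \<in> I \<Longrightarrow> \<phi> {x} = {x}"
  by (simp add: forest_map_def)
lemma fm_inner: "forest_map I F G \<phi> \<Longrightarrow> C \<in> inner_vs F \<Longrightarrow> \<phi> C \<in> inner_vs G"
  by (simp add: forest_map_def)
lemma fm_inj: "forest_map I F G \<phi> \<Longrightarrow> inj_on \<phi> (inner_vs F)"
  by (simp add: forest_map_def)
lemma fm_par: "forest_map I F G \<phi> \<Longrightarrow> is_parent F C P \<Longrightarrow> \<phi> C \<subset> \<phi> P"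
  by (simp add: forest_map_def)
lemma fm_edge: "forest_map I F G \<phi> \<Longrightarrow> C \<in> F \<Longrightarrow> C' \<in> F \<Longrightarrow> C \<noteq> C' \<Longrightarrow> same_tree F C C'
   \<Longrightarrow> edge_image F G \<phi> C \<inter> edge_image F G \<phi> C' = {}"
  by (simp add: forest_map_def)

lemma edge_image_split:
  assumes f: "forest I F" and d: "D \<in> F" and s: "splits F D A B"
    and x: "X \<in> G" "\<phi> A \<subseteq> X" "X \<subset> \<phi> D"
  shows "X \<in> edge_image F G \<phi> A"
proof -
  have "is_parent F A D" using splits_parent[OF f d s] .
  then have "\<forall>P. is_parent F A P \<longrightarrow> X \<subset> \<phi> P" using parent_unique x by blast
  thus ?thesis unfolding edge_image_def using x by blast
qed

lemma K:
  assumes f: "forest I F" and g: "forest I G" and m: "forest_map I F G \<phi>"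
    and d: "D \<in> F" and s: "splits F D A B" and aa: "A \<subseteq> \<phi> A" and bb: "B \<subseteq> \<phi> B"
    and e: "E \<in> G" and ed: "E \<subset> \<phi> D" and ea: "E \<inter> A \<noteq> {}" and eb: "E \<inter> B \<noteq> {}"
  shows False
proof -
  have s': "splits F D B A" using splits_sym[OF s] .
  have a: "A \<in> F" and b: "B \<in> F" and ab: "A \<inter> B = {}" and u: "A \<union> B = D"
    using s unfolding splits_def by auto
  have an: "A \<noteq> {}" using forest_ne[OF f a] .
  have neq: "A \<noteq> B" using ab an by blast
  have st: "same_tree F A B" unfolding same_tree_def using d u by blast
  have disj: "edge_image F G \<phi> A \<inter> edge_image F G \<phi> B = {}"
    using fm_edge[OF m a b neq st] .
  have pa: "\<phi> A \<subset> \<phi> D" using fm_par[OF m splits_parent[OF f d s]] .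
  have pb: "\<phi> B \<subset> \<phi> D" using fm_par[OF m splits_parent[OF f d s']] .
  have ga: "\<phi> A \<in> G" and gb: "\<phi> B \<in> G" using fm_in[OF m a] fm_in[OF m b] .
  have eA: "X \<in> edge_image F G \<phi> A" if "X \<in> G" "\<phi> A \<subseteq> X" "X \<subset> \<phi> D" for X
    using edge_image_split[OF f d s that] .
  have eB: "X \<in> edge_image F G \<phi> B" if "X \<in> G" "\<phi> B \<subseteq> X" "X \<subset> \<phi> D" for X
    using edge_image_split[OF f d s' that] .
  have c1: "E \<subseteq> \<phi> A \<or> \<phi> A \<subseteq> E"
    using forest_lam[OF g e ga] ea aa by blast
  have c2: "E \<subseteq> \<phi> B \<or> \<phi> B \<subseteq> E"
    using forest_lam[OF g e gb] eb bb by blast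
  show False
  proof (cases "\<phi> A \<subseteq> E \<and> \<phi> B \<subseteq> E")
    case True
    then show ?thesis using eA[OF e] eB[OF e] ed disj by blast
  next
    case False
    then have "E \<subseteq> \<phi> A \<or> E \<subseteq> \<phi> B" using c1 c2 by blast
    then have "\<phi> A \<inter> \<phi> B \<noteq> {}" using ea eb aa bb c1 c2 by blast
    then have "\<phi> A \<subseteq> \<phi> B \<or> \<phi> B \<subseteq> \<phi> A" using forest_lam[OF g ga gb] by blast
    then show ?thesis
    proof
      assume "\<phi> A \<subseteq> \<phi> B"
      then show False using eA[OF gb] eB[OF gb] pb disj by blast
    next
      assume "\<phi> B \<subseteq> \<phi> A"
      then show False using eA[OF ga] eB[OF ga] pa disj by blast
    qed
  qed
qed

lemma HULL:
  assumes f: "forest I F" and g: "forest I G" and m: "forest_map I F G \<phi>"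
  shows "C \<in> F \<Longrightarrow> C \<subseteq> \<phi> C \<and> \<phi> C = lca G C"
proof (induction "card C" arbitrary: C rule: less_induct)
  case less
  note c = less.prems
  show ?case
  proof (cases "2 \<le> card C")
    case False
    then obtain x where x: "x \<in> I" "C = {x}" using forest_small[OF f c] by blast
    have "{x} \<in> G" using forest_single[OF g x(1)] .
    then have "lca G {x} = {x}" using lca_props[OF g, of "{x}" "{x}"] by blast
    then show ?thesis using fm_leaf[OF m x(1)] x by simp
  next
    case True
    obtain A B where s: "splits F C A B" using forest_split[OF f c True] by blast
    have a: "A \<in> F" and b: "B \<in> F" and ab: "A \<inter> B = {}" and u: "A \<union> B = C"
      using s unfolding splits_def by auto
    have an: "A \<noteq> {}" "B \<noteq> {}" using forest_ne[OF f a] forest_ne[OF f b] .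
    have ca: "card A < card C" "card B < card C" using splits_card[OF f c s] by auto
    have iha: "A \<subseteq> \<phi> A" using less.hyps[OF ca(1) a] by blast
    have ihb: "B \<subseteq> \<phi> B" using less.hyps[OF ca(2) b] by blast
    have pa: "\<phi> A \<subset> \<phi> C" using fm_par[OF m splits_parent[OF f c s]] .
    have pb: "\<phi> B \<subset> \<phi> C" using fm_par[OF m splits_parent[OF f c splits_sym[OF s]]] .
    have cc: "C \<subseteq> \<phi> C" using iha ihb pa pb u by blast
    have gc: "\<phi> C \<in> G" using fm_in[OF m c] .
    have cn: "C \<noteq> {}" using forest_ne[OF f c] .
    note L = lca_props[OF g cn gc cc]
    have "lca G C = \<phi> C"
    proof (rule ccontr)
      assume ne: "lca G C \<noteq> \<phi> C"
      have "lca G C \<subset> \<phi> C" using L(3)[OF gc cc] ne by blast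
      moreover have "lca G C \<inter> A \<noteq> {}" "lca G C \<inter> B \<noteq> {}" using L(2) u an by blast+
      ultimately show False using K[OF f g m c s iha ihb L(1)] by blast
    qed
    then show ?thesis using cc by simp
  qed
qed

lemma fle_facts:
  assumes "forest_le I F G"
  shows "forest I F" "forest I G" "\<And>C. C \<in> F \<Longrightarrow> C \<subseteq> lca G C \<and> lca G C \<in> G"
    "\<And>C. C \<in> inner_vs F \<Longrightarrow> lca G C \<in> inner_vs G" "inj_on (lca G) (inner_vs F)"
proof -
  show f: "forest I F" and g: "forest I G" using assms unfolding forest_le_def by auto
  obtain \<phi> where m: "forest_map I F G \<phi>" using assms unfolding forest_le_def by auto
  have h: "C \<in> F \<Longrightarrow> C \<subseteq> \<phi> C \<and> \<phi> C = lca G C" for C using HULL[OF f g m] .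
  show "\<And>C. C \<in> F \<Longrightarrow> C \<subseteq> lca G C \<and> lca G C \<in> G" using h fm_in[OF m] by metis
  have iF: "inner_vs F \<subseteq> F" unfolding inner_vs_def by blast
  show "\<And>C. C \<in> inner_vs F \<Longrightarrow> lca G C \<in> inner_vs G" using h fm_inner[OF m] iF by (metis subsetD)
  have "inj_on \<phi> (inner_vs F)" using fm_inj[OF m] .
  moreover have "\<And>C. C \<in> inner_vs F \<Longrightarrow> \<phi> C = lca G C" using h iF by blast
  ultimately show "inj_on (lca G) (inner_vs F)" using inj_on_cong by blast
qed

lemma fle_map_lca:
  assumes "forest_le I F G" "forest_map I F G \<phi>" "C \<in> F"
  shows "\<phi> C = lca G C"
  using HULL[OF fle_facts(1,2)[OF assms(1)] assms(2) assms(3)] by blast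

lemma inner_fin: "forest I F \<Longrightarrow> finite (inner_vs F)"
proof -
  assume "forest I F"
  then have "finite F" by (rule forest_finF)
  then show ?thesis unfolding inner_vs_def by simp
qed

lemma card_inner_le: "forest_le I F G \<Longrightarrow> card (inner_vs F) \<le> card (inner_vs G)"
  using card_inj_on_le[OF fle_facts(5) _ inner_fin[OF fle_facts(2)]] fle_facts(4) by blast

lemma vT_eq:
  assumes "forest_le I F T"
  shows "vT I T F = lca T ` inner_vs F"
proof -
  obtain \<phi> where m: "forest_map I F T \<phi>" using assms unfolding forest_le_def by auto
  have iF: "inner_vs F \<subseteq> F" unfolding inner_vs_def by blast
  have eq: "\<psi> ` inner_vs F = lca T ` inner_vs F" if "forest_map I F T \<psi>" for \<psi>
    using fle_map_lca[OF assms that] iF by (metis image_cong subsetD)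
  show ?thesis unfolding vT_def
  proof (rule the_equality)
    show "\<exists>\<phi>. forest_map I F T \<phi> \<and> lca T ` inner_vs F = \<phi> ` inner_vs F" using m eq by metis
  next
    fix S assume "\<exists>\<phi>. forest_map I F T \<phi> \<and> S = \<phi> ` inner_vs F"
    then show "S = lca T ` inner_vs F" using eq by metis
  qed
qed


definition cnt :: "'a set set \<Rightarrow> 'a set \<Rightarrow> nat" where
  "cnt F S = card {C \<in> inner_vs F. C \<subseteq> S}"

lemma cnt_fin: "forest I F \<Longrightarrow> finite {C \<in> inner_vs F. C \<subseteq> S}"
proof -
  assume "forest I F"
  then have "finite (inner_vs F)" by (rule inner_fin)
  then show ?thesis by simp
qed

lemma U:
  assumes f: "forest I F"
  shows "S \<subseteq> I \<Longrightarrow> S \<noteq> {} \<Longrightarrow> cnt F S + 1 \<le> card S \<and> (S \<notin> F \<longrightarrow> cnt F S + 2 \<le> card S)"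
proof (induction "card S" arbitrary: S rule: less_induct)
  case less
  have sI: "S \<subseteq> I" and sn: "S \<noteq> {}" using less.prems by auto
  have fI: "finite I" using forest_fin[OF f] .
  have fs: "finite S" using finite_subset[OF sI fI] .
  have fin: "\<And>X. finite {C \<in> inner_vs F. C \<subseteq> X}" using cnt_fin[OF f] .
  show ?case
  proof (cases "S \<in> F")
    case sF: True
    show ?thesis
    proof (cases "2 \<le> card S")
      case False
      have "{C \<in> inner_vs F. C \<subseteq> S} = {}"
      proof -
        have "\<not> C \<subseteq> S" if "C \<in> inner_vs F" for C
        proof
          assume "C \<subseteq> S"
          then have "card C \<le> card S" using card_mono[OF fs] by blast
          thus False using that False unfolding inner_vs_def by auto
        qed
        thus ?thesis by blast
      qed
      then have "cnt F S = 0" unfolding cnt_def by (simp only: card.empty)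
      moreover have "card S \<noteq> 0" using fs sn by simp
      ultimately have "cnt F S = 0" "card S \<ge> 1" by auto
      then show ?thesis using sF by simp
    next
      case True
      obtain A B where s: "splits F S A B" using forest_split[OF f sF True] by blast
      have a: "A \<in> F" and b: "B \<in> F" and ab: "A \<inter> B = {}" and u: "A \<union> B = S"
        using s unfolding splits_def by auto
      have ca: "card A < card S" "card B < card S" using splits_card[OF f sF s] by auto
      have iha: "cnt F A + 1 \<le> card A" using less.hyps[OF ca(1)] forest_sub[OF f a] forest_ne[OF f a] by blast
      have ihb: "cnt F B + 1 \<le> card B" using less.hyps[OF ca(2)] forest_sub[OF f b] forest_ne[OF f b] by blast
      have sub: "{C \<in> inner_vs F. C \<subseteq> S} \<subseteq> {S} \<union> ({C \<in> inner_vs F. C \<subseteq> A} \<union> {C \<in> inner_vs F. C \<subseteq> B})"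
      proof
        fix C assume c: "C \<in> {C \<in> inner_vs F. C \<subseteq> S}"
        show "C \<in> {S} \<union> ({C \<in> inner_vs F. C \<subseteq> A} \<union> {C \<in> inner_vs F. C \<subseteq> B})"
        proof (cases "C = S")
          case False
          then have "C \<subset> S" using c by blast
          moreover have "C \<in> F" using c unfolding inner_vs_def by blast
          ultimately have "C \<subseteq> A \<or> C \<subseteq> B" using sub_split[OF f s] by blast
          thus ?thesis using c by blast
        qed simp
      qed
      have "cnt F S \<le> card ({S} \<union> ({C \<in> inner_vs F. C \<subseteq> A} \<union> {C \<in> inner_vs F. C \<subseteq> B}))"
        unfolding cnt_def by (rule card_mono) (use sub fin in auto)
      also have "\<dots> \<le> card {S} + card ({C \<in> inner_vs F. C \<subseteq> A} \<union> {C \<in> inner_vs F. C \<subseteq> B})"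
        by (rule card_Un_le)
      also have "\<dots> \<le> 1 + (cnt F A + cnt F B)"
        using card_Un_le[of "{C \<in> inner_vs F. C \<subseteq> A}" "{C \<in> inner_vs F. C \<subseteq> B}"]
        unfolding cnt_def by simp
      finally have "cnt F S \<le> 1 + (cnt F A + cnt F B)" .
      moreover have "card S = card A + card B"
        using card_Un_disjoint[of A B] u ab fs by (metis finite_Un)
      ultimately show ?thesis using iha ihb sF by linarith
    qed
  next
    case sF: False
    obtain x where x: "x \<in> S" using sn by blast
    let ?Q = "{C \<in> F. x \<in> C \<and> C \<subseteq> S}"
    have finQ: "finite ?Q" using forest_finF[OF f] by simp
    have xQ: "{x} \<in> ?Q" using forest_single[OF f] x sI by blast
    obtain C0 where c0: "C0 \<in> ?Q" and c0m: "\<forall>b\<in>?Q. C0 \<le> b \<longrightarrow> C0 = b"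
      using finite_has_maximal[OF finQ] xQ by blast
    have c0F: "C0 \<in> F" and xc0: "x \<in> C0" and c0S: "C0 \<subseteq> S" using c0 by auto
    have c0ne: "C0 \<noteq> S" using sF c0F by blast
    let ?R = "S - C0"
    have rne: "?R \<noteq> {}" using c0ne c0S by blast
    have fc0: "finite C0" using finite_subset[OF c0S fs] .
    have cs: "card S = card C0 + card ?R"
      using card_Un_disjoint[of C0 ?R] fc0 fs c0S by (metis Diff_disjoint Un_Diff_cancel2 finite_Diff sup.absorb_iff2 sup_commute)
    have c0pos: "card C0 > 0" using fc0 xc0 by (metis card_gt_0_iff empty_iff)
    have rpos: "card ?R > 0" using rne fs by (simp add: card_gt_0_iff)
    have ih0: "cnt F C0 + 1 \<le> card C0" using less.hyps[of C0] cs rpos c0S sI xc0 by fastforce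
    have ihr: "cnt F ?R + 1 \<le> card ?R" using less.hyps[of ?R] cs c0pos rne sI by fastforce
    have sub: "{C \<in> inner_vs F. C \<subseteq> S} \<subseteq> {C \<in> inner_vs F. C \<subseteq> C0} \<union> {C \<in> inner_vs F. C \<subseteq> ?R}"
    proof
      fix C assume c: "C \<in> {C \<in> inner_vs F. C \<subseteq> S}"
      have cF: "C \<in> F" using c unfolding inner_vs_def by blast
      have "C \<subseteq> C0 \<or> C0 \<subseteq> C \<or> C \<inter> C0 = {}" using forest_lam[OF f cF c0F] .
      moreover have "C0 \<subseteq> C \<Longrightarrow> C = C0" using c0m cF c xc0 by blast
      ultimately show "C \<in> {C \<in> inner_vs F. C \<subseteq> C0} \<union> {C \<in> inner_vs F. C \<subseteq> ?R}" using c by blast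
    qed
    have "cnt F S \<le> card ({C \<in> inner_vs F. C \<subseteq> C0} \<union> {C \<in> inner_vs F. C \<subseteq> ?R})"
      unfolding cnt_def by (rule card_mono) (use sub fin in auto)
    also have "\<dots> \<le> cnt F C0 + cnt F ?R" unfolding cnt_def by (rule card_Un_le)
    finally show ?thesis using ih0 ihr cs sF by linarith
  qed
qed

lemma inF:
  assumes f: "forest I F" and "S \<subseteq> I" "S \<noteq> {}" "card S \<le> cnt F S + 1"
  shows "S \<in> F"
  using U[OF f assms(2,3)] assms(4) by linarith

lemma L:
  assumes f: "forest I F"
  shows "D \<in> F \<Longrightarrow> card D \<le> cnt F D + 1"
proof (induction "card D" arbitrary: D rule: less_induct)
  case less
  note d = less.prems
  have fin: "\<And>X. finite {C \<in> inner_vs F. C \<subseteq> X}" using cnt_fin[OF f] .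
  show ?case
  proof (cases "2 \<le> card D")
    case False
    then show ?thesis by linarith
  next
    case True
    obtain A B where s: "splits F D A B" using forest_split[OF f d True] by blast
    have a: "A \<in> F" and b: "B \<in> F" and ab: "A \<inter> B = {}" and u: "A \<union> B = D" and ad: "A \<noteq> D" and bd: "B \<noteq> D"
      using s unfolding splits_def by auto
    have ca: "card A < card D" "card B < card D" using splits_card[OF f d s] by auto
    have iha: "card A \<le> cnt F A + 1" using less.hyps[OF ca(1) a] .
    have ihb: "card B \<le> cnt F B + 1" using less.hyps[OF ca(2) b] .
    have dI: "D \<in> inner_vs F" using d True unfolding inner_vs_def by blast
    have sub: "{D} \<union> ({C \<in> inner_vs F. C \<subseteq> A} \<union> {C \<in> inner_vs F. C \<subseteq> B}) \<subseteq> {C \<in> inner_vs F. C \<subseteq> D}"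
      using dI u by blast
    have d1: "{D} \<inter> ({C \<in> inner_vs F. C \<subseteq> A} \<union> {C \<in> inner_vs F. C \<subseteq> B}) = {}"
      using u ad bd by blast
    have ne: "C \<noteq> {}" if "C \<in> inner_vs F" for C using forest_ne[OF f] that unfolding inner_vs_def by blast
    have d2: "{C \<in> inner_vs F. C \<subseteq> A} \<inter> {C \<in> inner_vs F. C \<subseteq> B} = {}"
      using ab ne by blast
    have e2: "card ({C \<in> inner_vs F. C \<subseteq> A} \<union> {C \<in> inner_vs F. C \<subseteq> B}) = cnt F A + cnt F B"
      unfolding cnt_def by (rule card_Un_disjoint[OF fin fin d2])
    have e1: "card ({D} \<union> ({C \<in> inner_vs F. C \<subseteq> A} \<union> {C \<in> inner_vs F. C \<subseteq> B}))
        = card {D} + card ({C \<in> inner_vs F. C \<subseteq> A} \<union> {C \<in> inner_vs F. C \<subseteq> B})"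
      by (rule card_Un_disjoint) (use fin d1 in auto)
    have "1 + (cnt F A + cnt F B) = card ({D} \<union> ({C \<in> inner_vs F. C \<subseteq> A} \<union> {C \<in> inner_vs F. C \<subseteq> B}))"
      using e1 e2 by simp
    also have "\<dots> \<le> cnt F D" unfolding cnt_def by (rule card_mono[OF fin sub])
    finally have "1 + (cnt F A + cnt F B) \<le> cnt F D" .
    moreover have "card D = card A + card B"
      using card_Un_disjoint[of A B] u ab forest_finC[OF f a] forest_finC[OF f b] by metis
    ultimately show ?thesis using iha ihb by linarith
  qed
qed

lemma forest_decomp: "forest I F \<Longrightarrow> F = bot_forest I \<union> inner_vs F"
proof -
  assume f: "forest I F"
  have "bot_forest I \<subseteq> F" unfolding bot_forest_def using forest_single[OF f] by blast
  moreover have "inner_vs F \<subseteq> F" unfolding inner_vs_def by blast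
  moreover have "F \<subseteq> bot_forest I \<union> inner_vs F"
  proof
    fix C assume c: "C \<in> F"
    show "C \<in> bot_forest I \<union> inner_vs F"
    proof (cases "2 \<le> card C")
      case True then show ?thesis using c unfolding inner_vs_def by blast
    next
      case False then show ?thesis using forest_small[OF f c] unfolding bot_forest_def by blast
    qed
  qed
  ultimately show ?thesis by blast
qed

lemma E_strict:
  assumes le: "forest_le I F G" and eqc: "card (inner_vs F) = card (inner_vs G)"
  shows "F = G"
proof -
  note fa = fle_facts[OF le]
  have f: "forest I F" and g: "forest I G" using fa(1,2) .
  have img_sub: "lca G ` inner_vs F \<subseteq> inner_vs G" using fa(4) by blast
  have "card (lca G ` inner_vs F) = card (inner_vs G)" using card_image[OF fa(5)] eqc by simp
  then have img: "lca G ` inner_vs F = inner_vs G" using card_subset_eq[OF inner_fin[OF g] img_sub] by simp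
  have "D \<in> F" if dG: "D \<in> inner_vs G" for D
  proof -
    have dG': "D \<in> G" using dG unfolding inner_vs_def by blast
    have "{E \<in> inner_vs G. E \<subseteq> D} \<subseteq> lca G ` {C \<in> inner_vs F. C \<subseteq> D}"
    proof
      fix E assume e: "E \<in> {E \<in> inner_vs G. E \<subseteq> D}"
      then obtain C where c: "C \<in> inner_vs F" "E = lca G C" using img by blast
      have "C \<subseteq> lca G C" using fa(3) c(1) unfolding inner_vs_def by blast
      then show "E \<in> lca G ` {C \<in> inner_vs F. C \<subseteq> D}" using c e by blast
    qed
    then have "cnt G D \<le> card (lca G ` {C \<in> inner_vs F. C \<subseteq> D})"
      unfolding cnt_def by (rule card_mono[OF finite_imageI[OF cnt_fin[OF f]]])
    also have "\<dots> \<le> cnt F D" unfolding cnt_def by (rule card_image_le[OF cnt_fin[OF f]])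
    finally have "cnt G D \<le> cnt F D" .
    moreover have "card D \<le> cnt G D + 1" using L[OF g dG'] .
    ultimately show "D \<in> F" using inF[OF f forest_sub[OF g dG'] forest_ne[OF g dG']] by linarith
  qed
  then have "inner_vs G \<subseteq> inner_vs F" unfolding inner_vs_def by blast
  then have "inner_vs G = inner_vs F" using card_subset_eq[OF inner_fin[OF f]] eqc by metis
  then show ?thesis using forest_decomp[OF f] forest_decomp[OF g] by metis
qed

lemma DC:
  assumes g: "forest_le I G T" and S1: "S \<subseteq> lca T ` inner_vs G" and S2: "S \<subseteq> inner_vs T"
    and dc: "\<forall>D\<in>S. \<forall>E\<in>inner_vs T. E \<subseteq> D \<longrightarrow> E \<in> S"
  shows "S \<subseteq> G"
proof
  fix D assume dS: "D \<in> S"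
  note fa = fle_facts[OF g]
  have gf: "forest I G" and t: "forest I T" using fa(1,2) .
  have dT: "D \<in> T" using S2 dS unfolding inner_vs_def by blast
  have "{E \<in> inner_vs T. E \<subseteq> D} \<subseteq> lca T ` {C \<in> inner_vs G. C \<subseteq> D}"
  proof
    fix E assume e: "E \<in> {E \<in> inner_vs T. E \<subseteq> D}"
    then have "E \<in> S" using dc dS by blast
    then obtain C where c: "C \<in> inner_vs G" "E = lca T C" using S1 by blast
    have "C \<subseteq> lca T C" using fa(3) c(1) unfolding inner_vs_def by blast
    then show "E \<in> lca T ` {C \<in> inner_vs G. C \<subseteq> D}" using c e by blast
  qed
  then have "cnt T D \<le> card (lca T ` {C \<in> inner_vs G. C \<subseteq> D})"
    unfolding cnt_def by (rule card_mono[OF finite_imageI[OF cnt_fin[OF gf]]])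
  also have "\<dots> \<le> cnt G D" unfolding cnt_def by (rule card_image_le[OF cnt_fin[OF gf]])
  finally have "cnt T D \<le> cnt G D" .
  moreover have "card D \<le> cnt T D + 1" using L[OF t dT] .
  ultimately show "D \<in> G" using inF[OF gf forest_sub[OF t dT] forest_ne[OF t dT]] by linarith
qed


lemma SUB:
  assumes f: "forest I F" and g: "forest I G" and fg: "F \<subseteq> G"
  shows "forest_le I F G"
proof -
  have edge: "edge_image F G id C \<inter> edge_image F G id C' = {}"
    if c: "C \<in> F" and c': "C' \<in> F" and ne: "C \<noteq> C'" and st: "same_tree F C C'" for C C'
  proof (rule ccontr)
    assume "edge_image F G id C \<inter> edge_image F G id C' \<noteq> {}"
    then obtain X where xG: "X \<in> G" and cx: "C \<subseteq> X" and c'x: "C' \<subseteq> X"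
      and px: "\<And>P. is_parent F C P \<Longrightarrow> X \<subset> P" and p'x: "\<And>P. is_parent F C' P \<Longrightarrow> X \<subset> P"
      unfolding edge_image_def by auto
    obtain E where e: "E \<in> F" "C \<subseteq> E" "C' \<subseteq> E" using st unfolding same_tree_def by blast
    have cn: "C \<noteq> {}" "C' \<noteq> {}" using forest_ne[OF f c] forest_ne[OF f c'] .
    have "C \<subseteq> C' \<or> C' \<subseteq> C \<or> C \<inter> C' = {}" using forest_lam[OF f c c'] .
    moreover have "\<not> C \<subset> C'"
    proof
      assume "C \<subset> C'"
      then obtain P where "is_parent F C P" "P \<subseteq> C'" using parent_exists[OF f c c'] by blast
      then show False using px c'x by blast
    qed
    moreover have "\<not> C' \<subset> C"
    proof
      assume "C' \<subset> C"
      then obtain P where "is_parent F C' P" "P \<subseteq> C" using parent_exists[OF f c' c] by blast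
      then show False using p'x cx by blast
    qed
    moreover have "C \<inter> C' = {} \<Longrightarrow> False"
    proof -
      assume dis: "C \<inter> C' = {}"
      have "C \<subset> E" using e cn dis by blast
      then obtain P where p: "is_parent F C P" using parent_exists[OF f c e(1)] by blast
      have "C' \<subset> E" using e cn dis by blast
      then obtain P' where p': "is_parent F C' P'" using parent_exists[OF f c' e(1)] by blast
      have pF: "P \<in> F" "P' \<in> F" using p p' unfolding is_parent_def by auto
      have xp: "X \<subset> P" "X \<subset> P'" using px[OF p] p'x[OF p'] .
      have "P \<subseteq> P' \<or> P' \<subseteq> P \<or> P \<inter> P' = {}" using forest_lam[OF f pF] .
      have "C' \<subset> P" using c'x xp(1) by blast
      then have pp1: "P' \<subseteq> P" using p' pF(1) unfolding is_parent_def by blast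
      have "C \<subset> P'" using cx xp(2) by blast
      then have pp2: "P \<subseteq> P'" using p pF(2) unfolding is_parent_def by blast
      have pp: "P = P'" using pp1 pp2 by (rule antisym[rotated])
      have cp: "C \<subseteq> P" "C' \<subseteq> P" using cx c'x xp by auto
      have fP: "finite P" using forest_finC[OF f pF(1)] .
      have "card (C \<union> C') \<le> card P" using card_mono[OF fP] cp by simp
      moreover have "card (C \<union> C') = card C + card C'"
        using card_Un_disjoint[OF _ _ dis] forest_finC[OF f c] forest_finC[OF f c'] by simp
      moreover have "card C \<ge> 1" "card C' \<ge> 1" using forest_finC[OF f c] forest_finC[OF f c'] cn
        by (simp_all add: Suc_le_eq card_gt_0_iff)
      ultimately have "2 \<le> card P" by linarith
      then obtain A B where s: "splits F P A B" using forest_split[OF f pF(1)] by blast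
      have "C = A \<or> C = B" using parent_split[OF f p s] .
      moreover have "C' = A \<or> C' = B" using parent_split[OF f _ s] p' pp by blast
      ultimately have "C \<union> C' = P" using s ne unfolding splits_def by blast
      then show False using cx c'x xp by blast
    qed
    ultimately show False using ne by blast
  qed
  have "forest_map I F G id"
    unfolding forest_map_def
  proof (intro conjI)
    show "\<forall>C\<in>F. id C \<in> G" using fg by auto
    show "\<forall>x\<in>I. id {x} = {x}" by simp
    show "\<forall>C\<in>inner_vs F. id C \<in> inner_vs G" using fg unfolding inner_vs_def by auto
    show "inj_on id (inner_vs F)" by simp
    show "\<forall>C P. is_parent F C P \<longrightarrow> id C \<subset> id P" unfolding is_parent_def by auto
    show "\<forall>C\<in>F. \<forall>C'\<in>F. C \<noteq> C' \<and> same_tree F C C' \<longrightarrow> edge_image F G id C \<inter> edge_image F G id C' = {}"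
      using edge by blast
  qed
  then show ?thesis unfolding forest_le_def using f g by blast
qed

lemma bot_forest: "finite I \<Longrightarrow> forest I (bot_forest I)"
  unfolding forest_def bot_forest_def by auto

lemma bot_le: "forest I G \<Longrightarrow> forest_le I (bot_forest I) G"
proof -
  assume g: "forest I G"
  have bf: "forest I (bot_forest I)" using bot_forest[OF forest_fin[OF g]] .
  have "bot_forest I \<subseteq> G" using forest_decomp[OF g] by blast
  then show ?thesis using SUB[OF bf g] by blast
qed

lemma inner_bot: "inner_vs (bot_forest I) = {}"
  unfolding inner_vs_def bot_forest_def by auto

definition cherry :: "'a set \<Rightarrow> 'a \<Rightarrow> 'a \<Rightarrow> 'a set set" where
  "cherry I p q = bot_forest I \<union> {{p,q}}"

lemma cherry_forest:
  assumes "finite I" "p \<in> I" "q \<in> I" "p \<noteq> q"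
  shows "forest I (cherry I p q)"
proof -
  have split: "\<exists>A\<in>cherry I p q. \<exists>B\<in>cherry I p q. A \<inter> B = {} \<and> A \<union> B = C \<and> A \<noteq> C \<and> B \<noteq> C"
    if "C \<in> cherry I p q" "2 \<le> card C" for C
  proof -
    have "C = {p,q}" using that unfolding cherry_def bot_forest_def by auto
    moreover have "{p} \<in> cherry I p q" "{q} \<in> cherry I p q" using assms unfolding cherry_def bot_forest_def by auto
    moreover have "{p} \<inter> {q} = {} \<and> {p} \<union> {q} = {p,q} \<and> {p} \<noteq> {p,q} \<and> {q} \<noteq> {p,q}"
      using assms(4) by auto
    ultimately show ?thesis by (metis (no_types, lifting))
  qed
  show ?thesis unfolding forest_def
  proof (intro conjI ballI impI)
    show "finite I" using assms(1) .
  next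
    fix C assume "C \<in> cherry I p q" then show "C \<subseteq> I" using assms unfolding cherry_def bot_forest_def by auto
  next
    fix C assume "C \<in> cherry I p q" then show "C \<noteq> {}" unfolding cherry_def bot_forest_def by auto
  next
    fix x assume "x \<in> I" then show "{x} \<in> cherry I p q" unfolding cherry_def bot_forest_def by auto
  next
    fix C D assume "C \<in> cherry I p q" "D \<in> cherry I p q"
    then show "C \<subseteq> D \<or> D \<subseteq> C \<or> C \<inter> D = {}" unfolding cherry_def bot_forest_def by auto
  next
    fix C assume "C \<in> cherry I p q" "2 \<le> card C"
    then show "\<exists>A\<in>cherry I p q. \<exists>B\<in>cherry I p q. A \<inter> B = {} \<and> A \<union> B = C \<and> A \<noteq> C \<and> B \<noteq> C"
      by (rule split)
  qed
qed

lemma cherry_inner: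
  assumes "p \<noteq> q"
  shows "inner_vs (cherry I p q) = {{p,q}}"
  using assms unfolding inner_vs_def cherry_def bot_forest_def by auto

lemma cherry_le:
  assumes g: "forest I G" and pq: "p \<in> I" "q \<in> I" "p \<noteq> q" and h: "H \<in> G" "{p,q} \<subseteq> H"
    and hm: "\<forall>D\<in>G. {p,q} \<subseteq> D \<longrightarrow> H \<subseteq> D"
  shows "forest_le I (cherry I p q) G"
proof -
  let ?K = "cherry I p q"
  define \<phi> where "\<phi> = (\<lambda>C. if C = {p,q} then H else C)"
  have fK: "forest I ?K" using cherry_forest[OF forest_fin[OF g] pq] .
  have Kel: "C \<in> ?K \<Longrightarrow> C = {p,q} \<or> (\<exists>x\<in>I. C = {x})" for C unfolding cherry_def bot_forest_def by auto
  have ph: "\<phi> {p,q} = H" unfolding \<phi>_def by simp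
  have psing: "\<phi> {x} = {x}" for x unfolding \<phi>_def using pq(3) by (auto simp: doubleton_eq_iff)
  have par: "is_parent ?K C P \<Longrightarrow> P = {p,q} \<and> (C = {p} \<or> C = {q})" for C P
  proof -
    assume a: "is_parent ?K C P"
    then have c: "C \<in> ?K" "P \<in> ?K" "C \<subset> P" unfolding is_parent_def by auto
    have "C \<noteq> {}" using forest_ne[OF fK c(1)] .
    then show ?thesis using Kel[OF c(1)] Kel[OF c(2)] c(3) by auto
  qed
  have parp: "is_parent ?K {p} {p,q}" and parq: "is_parent ?K {q} {p,q}"
  proof -
    have "splits ?K {p,q} {p} {q}" unfolding splits_def cherry_def bot_forest_def using pq by auto
    moreover have "{p,q} \<in> ?K" unfolding cherry_def by auto
    ultimately show "is_parent ?K {p} {p,q}" "is_parent ?K {q} {p,q}"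
      using splits_parent[OF fK] splits_sym by blast+
  qed
  have ei_pq: "X \<in> edge_image ?K G \<phi> {p,q} \<Longrightarrow> H \<subseteq> X" for X
    unfolding edge_image_def using ph by auto
  have ei_p: "X \<in> edge_image ?K G \<phi> {p} \<Longrightarrow> X \<in> G \<and> p \<in> X \<and> X \<subset> H" for X
    unfolding edge_image_def using ph psing parp by auto
  have ei_q: "X \<in> edge_image ?K G \<phi> {q} \<Longrightarrow> X \<in> G \<and> q \<in> X \<and> X \<subset> H" for X
    unfolding edge_image_def using ph psing parq by auto
  have edge: "edge_image ?K G \<phi> C \<inter> edge_image ?K G \<phi> C' = {}"
    if c: "C \<in> ?K" "C' \<in> ?K" "C \<noteq> C'" "same_tree ?K C C'" for C C'
  proof -
    obtain D where d: "D \<in> ?K" "C \<subseteq> D" "C' \<subseteq> D" using c(4) unfolding same_tree_def by blast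
    have cn: "C \<noteq> {}" "C' \<noteq> {}" using forest_ne[OF fK c(1)] forest_ne[OF fK c(2)] .
    have "D = {p,q}" using Kel[OF d(1)] d cn c(3) by auto
    then have cc: "C \<in> {{p},{q},{p,q}}" "C' \<in> {{p},{q},{p,q}}" using d cn Kel c by auto
    have "\<not> (X \<in> edge_image ?K G \<phi> C \<and> X \<in> edge_image ?K G \<phi> C')" for X
    proof
      assume xx: "X \<in> edge_image ?K G \<phi> C \<and> X \<in> edge_image ?K G \<phi> C'"
      consider "C = {p}" "C' = {q}" | "C = {q}" "C' = {p}" | "C = {p,q}" | "C' = {p,q}"
        using cc c(3) by auto
      then show False
      proof cases
        case 1 then show False using xx ei_p ei_q hm by blast
      next
        case 2 then show False using xx ei_p ei_q hm by blast
      next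
        case 3
        then have "C' = {p} \<or> C' = {q}" using cc c(3) by auto
        then show False using xx 3 ei_pq ei_p ei_q by blast
      next
        case 4
        then have "C = {p} \<or> C = {q}" using cc c(3) by auto
        then show False using xx 4 ei_pq ei_p ei_q by blast
      qed
    qed
    then show ?thesis by blast
  qed
  have "forest_map I ?K G \<phi>"
    unfolding forest_map_def
  proof (intro conjI)
    show "\<forall>C\<in>?K. \<phi> C \<in> G"
    proof
      fix C assume "C \<in> ?K"
      then show "\<phi> C \<in> G" using Kel ph psing h(1) forest_single[OF g] by metis
    qed
    show "\<forall>x\<in>I. \<phi> {x} = {x}" using psing by blast
    have hc: "2 \<le> card H"
    proof -
      have "card {p,q} \<le> card H" using card_mono[OF forest_finC[OF g h(1)] h(2)] .
      then show ?thesis using pq(3) by simp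
    qed
    show "\<forall>C\<in>inner_vs ?K. \<phi> C \<in> inner_vs G"
      using cherry_inner[OF pq(3)] ph h(1) hc unfolding inner_vs_def by auto
    show "inj_on \<phi> (inner_vs ?K)" using cherry_inner[OF pq(3)] by simp
    show "\<forall>C P. is_parent ?K C P \<longrightarrow> \<phi> C \<subset> \<phi> P"
    proof (intro allI impI)
      fix C P assume "is_parent ?K C P"
      then have pp: "P = {p,q}" and cc: "C = {p} \<or> C = {q}" using par by auto
      have "\<phi> P = H" using pp ph by simp
      moreover have "\<phi> C = C" using cc psing by auto
      moreover have "C \<subset> H" using cc h(2) pq(3) by auto
      ultimately show "\<phi> C \<subset> \<phi> P" by simp
    qed
    show "\<forall>C\<in>?K. \<forall>C'\<in>?K. C \<noteq> C' \<and> same_tree ?K C C' \<longrightarrow> edge_image ?K G \<phi> C \<inter> edge_image ?K G \<phi> C' = {}"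
      using edge by blast
  qed
  then show ?thesis unfolding forest_le_def using fK g by blast
qed

lemma COMP:
  assumes fg: "forest_le I F G" and gt: "forest_le I G T"
  shows "lca T ` inner_vs F \<subseteq> lca T ` inner_vs G"
proof
  fix V assume "V \<in> lca T ` inner_vs F"
  then obtain C where c: "C \<in> inner_vs F" and v: "V = lca T C" by blast
  note ff = fle_facts[OF fg] and gg = fle_facts[OF gt]
  have f: "forest I F" and g: "forest I G" and t: "forest I T" using ff(1,2) gg(2) .
  obtain \<psi> where m: "forest_map I G T \<psi>" using gt unfolding forest_le_def by blast
  have cF: "C \<in> F" using c unfolding inner_vs_def by blast
  let ?D = "lca G C"
  have dI: "?D \<in> inner_vs G" using ff(4)[OF c] .
  have dG: "?D \<in> G" and dc: "2 \<le> card ?D" using dI unfolding inner_vs_def by auto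
  have cd: "C \<subseteq> ?D" using ff(3)[OF cF] by blast
  have cn: "C \<noteq> {}" using forest_ne[OF f cF] .
  obtain D1 D2 where s: "splits G ?D D1 D2" using forest_split[OF g dG dc] by blast
  have d1: "D1 \<in> G" and d2: "D2 \<in> G" and u: "D1 \<union> D2 = ?D" and n1: "D1 \<noteq> ?D" and n2: "D2 \<noteq> ?D"
    using s unfolding splits_def by auto
  have lcaG: "\<And>D. D \<in> G \<Longrightarrow> C \<subseteq> D \<Longrightarrow> ?D \<subseteq> D" using lca_props(3)[OF g cn dG cd] .
  have "\<not> C \<subseteq> D1" using lcaG[OF d1] u n1 by blast
  moreover have "\<not> C \<subseteq> D2" using lcaG[OF d2] u n2 by blast
  ultimately have m1: "C \<inter> D1 \<noteq> {}" and m2: "C \<inter> D2 \<noteq> {}" using cd u by blast+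
  have psiD: "\<psi> ?D = lca T ?D" using fle_map_lca[OF gt m dG] .
  have dT: "lca T ?D \<in> T" "?D \<subseteq> lca T ?D" using gg(3)[OF dG] by auto
  have cT: "C \<subseteq> lca T ?D" using cd dT(2) by blast
  note LT = lca_props[OF t cn dT(1) cT]
  have sub: "lca T C \<subseteq> lca T ?D" using LT(3)[OF dT(1) cT] cT by blast
  have eq: "lca T C = lca T ?D"
  proof (rule ccontr)
    assume ne: "lca T C \<noteq> lca T ?D"
    have lt: "lca T C \<subset> \<psi> ?D" using sub ne psiD by blast
    have a1: "D1 \<subseteq> \<psi> D1" using HULL[OF g t m d1] by blast
    have a2: "D2 \<subseteq> \<psi> D2" using HULL[OF g t m d2] by blast
    have eT: "lca T C \<in> T" and cl: "C \<subseteq> lca T C" using LT(1,2) by auto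
    have e1: "lca T C \<inter> D1 \<noteq> {}" using m1 cl by blast
    have e2: "lca T C \<inter> D2 \<noteq> {}" using m2 cl by blast
    show False by (rule K[OF g t m dG s a1 a2 eT lt e1 e2])
  qed
  show "V \<in> lca T ` inner_vs G" using v eq dI by blast
qed


lemma seq_gap:
  fixes f :: "nat \<Rightarrow> nat"
  assumes h: "\<forall>k. a < k \<and> k \<le> n \<longrightarrow> f (k-1) < f k"
  shows "a \<le> j \<Longrightarrow> j \<le> k \<Longrightarrow> k \<le> n \<Longrightarrow> f j + (k - j) \<le> f k"
proof (induction k)
  case 0 then show ?case by simp
next
  case (Suc k)
  show ?case
  proof (cases "j = Suc k")
    case True then show ?thesis by simp
  next
    case False
    then have jk: "j \<le> k" using Suc.prems by simp
    have "f j + (k - j) \<le> f k" using Suc.IH[OF Suc.prems(1) jk] Suc.prems(3) by simp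
    moreover have "f k < f (Suc k)" using h Suc.prems jk by (metis diff_Suc_1 le_less_trans less_Suc_eq_le)
    ultimately show ?thesis using jk by simp
  qed
qed

lemma ATOM:
  assumes t: "tree I T" and at: "atom_in I T a"
  shows "\<exists>p q. p \<in> I \<and> q \<in> I \<and> p \<noteq> q \<and> a = cherry I p q"
proof -
  have tf: "forest I T" and iT: "I \<in> T" using t unfolding tree_def by auto
  have cov: "covers_in I T (bot_forest I) a" using at unfolding atom_in_def .
  have aint: "a \<in> interval I T" and ba: "forest_le I (bot_forest I) a" and nb: "bot_forest I \<noteq> a"
    and mx: "\<forall>H\<in>interval I T. forest_le I (bot_forest I) H \<and> forest_le I H a \<longrightarrow> H = bot_forest I \<or> H = a"
    using cov unfolding covers_in_def by auto
  have fa: "forest I a" using fle_facts(2)[OF ba] .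
  have aT: "forest_le I a T" using aint unfolding interval_def by blast
  have ne: "inner_vs a \<noteq> {}"
  proof
    assume "inner_vs a = {}"
    then have "a = bot_forest I" using forest_decomp[OF fa] by simp
    then show False using nb by simp
  qed
  obtain C where c: "C \<in> inner_vs a" and cm: "\<forall>b\<in>inner_vs a. b \<le> C \<longrightarrow> C = b"
    using finite_has_minimal[OF inner_fin[OF fa] ne] by blast
  have cF: "C \<in> a" and cc: "2 \<le> card C" using c unfolding inner_vs_def by auto
  obtain A B where s: "splits a C A B" using forest_split[OF fa cF cc] by blast
  have aF: "A \<in> a" and bF: "B \<in> a" and ab: "A \<inter> B = {}" and u: "A \<union> B = C" and ac: "A \<noteq> C" and bc: "B \<noteq> C"
    using s unfolding splits_def by auto
  have "\<not> 2 \<le> card A" using cm aF u ac unfolding inner_vs_def by blast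
  then obtain p where p: "p \<in> I" "A = {p}" using forest_small[OF fa aF] by blast
  have "\<not> 2 \<le> card B" using cm bF u bc unfolding inner_vs_def by blast
  then obtain q where q: "q \<in> I" "B = {q}" using forest_small[OF fa bF] by blast
  have pq: "p \<noteq> q" using ab p q by auto
  have Cpq: "C = {p,q}" using u p q by auto
  let ?H = "cherry I p q"
  have fH: "forest I ?H" using cherry_forest[OF forest_fin[OF fa] p(1) q(1) pq] .
  have Ha: "?H \<subseteq> a" using forest_decomp[OF fa] cF Cpq unfolding cherry_def by blast
  have Hle_a: "forest_le I ?H a" using SUB[OF fH fa Ha] .
  have bH: "forest_le I (bot_forest I) ?H" using bot_le[OF fH] .
  have pqI: "{p,q} \<subseteq> I" using p q by auto
  note LT = lca_props[OF tf _ iT pqI]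
  have HT: "forest_le I ?H T"
    by (rule cherry_le[OF tf p(1) q(1) pq LT(1) LT(2)]) (use LT(3) in auto)
  have Hint: "?H \<in> interval I T" unfolding interval_def using bH HT by blast
  have "?H \<noteq> bot_forest I"
  proof
    assume "?H = bot_forest I"
    then have "{p,q} \<in> bot_forest I" unfolding cherry_def by blast
    then show False using pq unfolding bot_forest_def by auto
  qed
  then have "?H = a" using mx Hint bH Hle_a by blast
  then show ?thesis using p q pq by blast
qed

lemma cherry_vT:
  assumes t: "tree I T" and pq: "p \<in> I" "q \<in> I" "p \<noteq> q" and le: "forest_le I (cherry I p q) T"
  shows "vT I T (cherry I p q) = {lca T {p,q}}"
  using vT_eq[OF le] cherry_inner[OF pq(3)] by simp


theorem lemma5p4:
  fixes I :: "'a set" and T :: "'a set set" and lab :: "'a set \<Rightarrow> nat"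
    and n i :: nat and x a :: "nat \<Rightarrow> 'a set set"
  assumes "finite I" and "tree I T" and "card (inner_vs T) = n"
    and "nice_order T lab n"
    and "x 0 = bot_forest I" and "x n = T"
    and "\<forall>k\<in>{1..n}. covers_in I T (x (k - 1)) (x k)"
    and "\<forall>k\<in>{1..<n}. lab (elabel I T (x (k - 1)) (x k)) < lab (elabel I T (x k) (x (k + 1)))"
    and "i \<in> {1..n}"
    and "\<forall>j\<in>{1..i}. a j \<in> Bset I T lab j"
  shows "x i = join_in I T (a ` {1..i})"
proof -
  note t = assms(2) and cardT = assms(3) and nice = assms(4) and x0 = assms(5) and xn = assms(6)
    and cov = assms(7) and inc = assms(8) and iin = assms(9) and aB = assms(10)
  have tf: "forest I T" and iT: "I \<in> T" using t unfolding tree_def by auto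
  have n1: "1 \<le> n" and i1: "1 \<le> i" and i_n: "i \<le> n" using iin by auto
  have lbij: "bij_betw lab (inner_vs T) {1..n}" and lmono: "\<forall>v\<in>inner_vs T. \<forall>v'\<in>inner_vs T. v \<subseteq> v' \<longrightarrow> lab v \<le> lab v'"
    using nice unfolding nice_order_def by auto
  have linj: "inj_on lab (inner_vs T)" using bij_betw_imp_inj_on[OF lbij] .
  have limg: "lab ` inner_vs T = {1..n}" using bij_betw_imp_surj_on[OF lbij] .
  have covk: "covers_in I T (x (k - 1)) (x k)" if "1 \<le> k" "k \<le> n" for k using cov that by auto
  have xint: "x k \<in> interval I T" if "k \<le> n" for k
  proof (cases "k = 0")
    case True then show ?thesis using covk[of 1] n1 unfolding covers_in_def by auto
  next
    case False then show ?thesis using covk[of k] that unfolding covers_in_def by auto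
  qed
  have xT: "forest_le I (x k) T" if "k \<le> n" for k using xint[OF that] unfolding interval_def by auto
  have xf: "forest I (x k)" if "k \<le> n" for k using fle_facts(1)[OF xT[OF that]] .
  have step: "forest_le I (x (k-1)) (x k)" "x (k-1) \<noteq> x k" if "1 \<le> k" "k \<le> n" for k
    using covk[OF that] unfolding covers_in_def by auto
  define m where "m k = card (inner_vs (x k))" for k
  have mstrict: "\<forall>k. 0 < k \<and> k \<le> n \<longrightarrow> m (k-1) < m k"
  proof (intro allI impI)
    fix k assume k: "0 < k \<and> k \<le> n"
    have "m (k-1) \<le> m k" unfolding m_def using card_inner_le[OF step(1)] k by auto
    moreover have "m (k-1) \<noteq> m k" unfolding m_def using E_strict[OF step(1)] step(2) k
      by (metis One_nat_def Suc_leI)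
    ultimately show "m (k-1) < m k" by simp
  qed
  have m0: "m 0 = 0" unfolding m_def using x0 by (simp add: inner_bot)
  have mn: "m n = n" unfolding m_def using xn cardT by simp
  have mk: "m k = k" if "k \<le> n" for k
  proof -
    have "m 0 + (k - 0) \<le> m k" using seq_gap[OF mstrict, of 0 k] that by simp
    moreover have "m k + (n - k) \<le> m n" using seq_gap[OF mstrict, of k n] that by simp
    ultimately show ?thesis using m0 mn that by linarith
  qed
  define S where "S k = lca T ` inner_vs (x k)" for k
  have Sv: "vT I T (x k) = S k" if "k \<le> n" for k unfolding S_def using vT_eq[OF xT[OF that]] .
  have Scard: "card (S k) = k" if "k \<le> n" for k
    unfolding S_def using card_image[OF fle_facts(5)[OF xT[OF that]]] mk[OF that] m_def by simp
  have Sinner: "S k \<subseteq> inner_vs T" if "k \<le> n" for k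
    unfolding S_def using fle_facts(4)[OF xT[OF that]] by blast
  have Sfin: "finite (S k)" if "k \<le> n" for k using finite_subset[OF Sinner[OF that] inner_fin[OF tf]] .
  have Smono: "S (k-1) \<subseteq> S k" if "1 \<le> k" "k \<le> n" for k
    unfolding S_def using COMP[OF step(1)[OF that] xT[OF that(2)]] .
  define v where "v k = the_elem (S k - S (k-1))" for k
  have Sdiff: "S k - S (k-1) = {v k}" if "1 \<le> k" "k \<le> n" for k
  proof -
    have "card (S k - S (k-1)) = card (S k) - card (S (k-1))"
      using card_Diff_subset[OF Sfin Smono[OF that]] that by simp
    also have "\<dots> = 1" using Scard that by simp
    finally obtain w where "S k - S (k-1) = {w}" using card_1_singletonE by blast
    then show ?thesis unfolding v_def by simp
  qed
  have Sins: "S k = insert (v k) (S (k-1))" if "1 \<le> k" "k \<le> n" for k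
    using Sdiff[OF that] Smono[OF that] by blast
  have vin: "v k \<in> inner_vs T" if "1 \<le> k" "k \<le> n" for k using Sins[OF that] Sinner[OF that(2)] by blast
  have el: "elabel I T (x (k-1)) (x k) = v k" if "1 \<le> k" "k \<le> n" for k
    unfolding elabel_def using Sv[of k] Sv[of "k-1"] that Sdiff[OF that] by simp
  define g where "g k = lab (v k)" for k
  have gstrict: "\<forall>k. 1 < k \<and> k \<le> n \<longrightarrow> g (k-1) < g k"
  proof (intro allI impI)
    fix k assume k: "1 < k \<and> k \<le> n"
    then have "k - 1 \<in> {1..<n}" by auto
    then have "lab (elabel I T (x (k - 1 - 1)) (x (k-1))) < lab (elabel I T (x (k-1)) (x (k - 1 + 1)))"
      using inc by blast
    moreover have "k - 1 + 1 = k" using k by simp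
    moreover have "elabel I T (x (k-1-1)) (x (k-1)) = v (k-1)"
    proof -
      have "1 \<le> k - 1" "k - 1 \<le> n" using k by auto
      then show ?thesis by (rule el)
    qed
    moreover have "elabel I T (x (k-1)) (x k) = v k" using el[of k] k by simp
    ultimately show "g (k-1) < g k" unfolding g_def by simp
  qed
  have grange: "g k \<in> {1..n}" if "1 \<le> k" "k \<le> n" for k unfolding g_def using vin[OF that] limg by blast
  have gk: "g k = k" if "1 \<le> k" "k \<le> n" for k
  proof -
    have "g 1 + (k - 1) \<le> g k" using seq_gap[OF gstrict, of 1 k] that by simp
    moreover have "g k + (n - k) \<le> g n" using seq_gap[OF gstrict, of k n] that by simp
    moreover have "1 \<le> g 1" "g n \<le> n" using grange[of 1] grange[of n] n1 by auto
    ultimately show ?thesis using that by linarith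
  qed
  have S0: "S 0 = {}" unfolding S_def using x0 by (simp add: inner_bot)
  have Srange: "S k = v ` {1..k}" if "k \<le> n" for k
    using that
  proof (induction k)
    case 0 then show ?case using S0 by simp
  next
    case (Suc k)
    have "S (Suc k) = insert (v (Suc k)) (S k)" using Sins[of "Suc k"] Suc.prems by simp
    also have "\<dots> = v ` {1..Suc k}" using Suc.IH Suc.prems by (auto simp: atLeastAtMostSuc_conv)
    finally show ?case .
  qed
  have vlab: "lab (v j) = j" if "1 \<le> j" "j \<le> n" for j using gk[OF that] unfolding g_def .
  have Si_char: "S i = {u \<in> inner_vs T. lab u \<le> i}"
  proof
    show "S i \<subseteq> {u \<in> inner_vs T. lab u \<le> i}" using Srange[OF i_n] vin vlab i_n by auto
  next
    show "{u \<in> inner_vs T. lab u \<le> i} \<subseteq> S i"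
    proof
      fix u assume u: "u \<in> {u \<in> inner_vs T. lab u \<le> i}"
      then have "lab u \<in> {1..n}" using limg by blast
      then have j: "1 \<le> lab u" "lab u \<le> i" using u by auto
      have "v (lab u) = u" using linj vin[of "lab u"] vlab[of "lab u"] j i_n u
        unfolding inj_on_def by auto
      then show "u \<in> S i" using Srange[OF i_n] j by auto
    qed
  qed
  have Sdc: "\<forall>D\<in>S i. \<forall>E\<in>inner_vs T. E \<subseteq> D \<longrightarrow> E \<in> S i"
    using Si_char lmono by fastforce
  have Si_sub: "S i \<subseteq> x i"
    using DC[OF xT[OF i_n] _ Sinner[OF i_n] Sdc] unfolding S_def by blast
  have Si_inner: "S i \<subseteq> inner_vs (x i)" using Si_sub Sinner[OF i_n] unfolding inner_vs_def by blast
  have inner_xi: "inner_vs (x i) = S i"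
    using card_subset_eq[OF inner_fin[OF xf[OF i_n]] Si_inner] Scard[OF i_n] mk[OF i_n] m_def by simp
  have xi_eq: "x i = bot_forest I \<union> S i" using forest_decomp[OF xf[OF i_n]] inner_xi by simp
  have botT: "bot_forest I \<subseteq> T" using forest_decomp[OF tf] by blast
  have xi_T: "x i \<subseteq> T" using xi_eq botT Sinner[OF i_n] unfolding inner_vs_def by blast
  have bT: "forest_le I (bot_forest I) T" using bot_le[OF tf] .
  have atoms: "\<exists>p q. p \<in> I \<and> q \<in> I \<and> p \<noteq> q \<and> a j = cherry I p q \<and> lca T {p,q} = v j"
    if j: "j \<in> {1..i}" for j
  proof -
    have ab: "atom_in I T (a j)" and al: "lab (elabel I T (bot_forest I) (a j)) = j"
      using aB j unfolding Bset_def by auto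
    obtain p q where pq: "p \<in> I" "q \<in> I" "p \<noteq> q" and aj: "a j = cherry I p q"
      using ATOM[OF t ab] by blast
    have aint: "a j \<in> interval I T" using ab unfolding atom_in_def covers_in_def by blast
    have aT: "forest_le I (cherry I p q) T" using aint unfolding interval_def aj by simp
    have "elabel I T (bot_forest I) (a j) = lca T {p,q}"
      unfolding elabel_def using cherry_vT[OF t pq aT] vT_eq[OF bT] aj by (simp add: inner_bot)
    then have lj: "lab (lca T {p,q}) = j" using al by simp
    have pqI: "{p,q} \<subseteq> I" using pq by auto
    note LT = lca_props[OF tf _ iT pqI]
    have "card {p,q} \<le> card (lca T {p,q})" using card_mono[OF forest_finC[OF tf LT(1)] LT(2)] by simp
    then have "lca T {p,q} \<in> inner_vs T" using LT(1) pq(3) unfolding inner_vs_def by simp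
    moreover have "v j \<in> inner_vs T" "lab (v j) = j" using vin vlab j i_n by auto
    ultimately have "lca T {p,q} = v j" using linj lj unfolding inj_on_def by metis
    then show ?thesis using pq aj by blast
  qed
  have xint_i: "x i \<in> interval I T" using xint[OF i_n] .
  have ub: "forest_le I s (x i)" if sa: "s \<in> a ` {1..i}" for s
  proof -
    obtain j where j: "j \<in> {1..i}" "s = a j" using sa by blast
    obtain p q where pq: "p \<in> I" "q \<in> I" "p \<noteq> q" and aj: "a j = cherry I p q" and lv: "lca T {p,q} = v j"
      using atoms[OF j(1)] by blast
    have pqI: "{p,q} \<subseteq> I" using pq by auto
    note LT = lca_props[OF tf _ iT pqI]
    have vS: "v j \<in> S i" using Srange[OF i_n] j(1) by auto
    show ?thesis unfolding j(2) aj
      by (rule cherry_le[OF xf[OF i_n] pq, of "v j"]) (use vS Si_sub LT lv xi_T in auto)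
  qed
  have least: "forest_le I (x i) w" if w: "w \<in> interval I T" "\<forall>s\<in>a ` {1..i}. forest_le I s w" for w
  proof -
    have wT: "forest_le I w T" and fw: "forest I w" using w(1) unfolding interval_def by (auto dest: fle_facts(1))
    have "S i \<subseteq> lca T ` inner_vs w"
    proof
      fix u assume "u \<in> S i"
      then obtain j where j: "j \<in> {1..i}" "u = v j" using Srange[OF i_n] by auto
      obtain p q where pq: "p \<in> I" "q \<in> I" "p \<noteq> q" and aj: "a j = cherry I p q" and lv: "lca T {p,q} = v j"
        using atoms[OF j(1)] by blast
      have "forest_le I (cherry I p q) w" using w(2) j(1) aj by (metis image_eqI)
      then have "lca T ` inner_vs (cherry I p q) \<subseteq> lca T ` inner_vs w" using COMP wT by blast
      then show "u \<in> lca T ` inner_vs w" using cherry_inner[OF pq(3)] lv j(2) by simp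
    qed
    then have "S i \<subseteq> w" using DC[OF wT _ Sinner[OF i_n] Sdc] by blast
    moreover have "bot_forest I \<subseteq> w" using forest_decomp[OF fw] by blast
    ultimately have "x i \<subseteq> w" using xi_eq by blast
    then show ?thesis using SUB[OF xf[OF i_n] fw] by blast
  qed
  show ?thesis unfolding join_in_def
  proof (rule the_equality[symmetric])
    show "x i \<in> interval I T \<and> (\<forall>s\<in>a ` {1..i}. forest_le I s (x i))
      \<and> (\<forall>w\<in>interval I T. (\<forall>s\<in>a ` {1..i}. forest_le I s w) \<longrightarrow> forest_le I (x i) w)"
      using xint_i ub least by blast
  next
    fix z assume z: "z \<in> interval I T \<and> (\<forall>s\<in>a ` {1..i}. forest_le I s z)
      \<and> (\<forall>w\<in>interval I T. (\<forall>s\<in>a ` {1..i}. forest_le I s w) \<longrightarrow> forest_le I z w)"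
    have zx: "forest_le I z (x i)" using z xint_i ub by blast
    have xz: "forest_le I (x i) z" using z least by blast
    have "card (inner_vs z) = card (inner_vs (x i))"
      using card_inner_le[OF zx] card_inner_le[OF xz] by simp
    then show "z = x i" using E_strict[OF zx] by simp
  qed
qed

end
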